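(* Let $G$ be a finite group with $d(G)\geq 2$, and assume that $G$ is $2$-flexible. Then $G/\mathrm{Cyc}(G)$ is $1$-flexible.
   Context: For a finite group $H$, $d(H)$ denotes the minimal size of a generating set of $H$. For an integer $1 \leq k \leq d(H)$, a finite group $H$ is called $k$-flexible if for any $x_1,\dots,x_k \in H$ with $d(\langle x_1,\dots,x_k\rangle)=k$ there exist $x_{k+1},\dots,x_{d(H)} \in H$ such that $\langle x_1,\dots,x_{d(H)}\rangle = H$. The cycliciser of $G$ is $\mathrm{Cyc}(G) = \{c \in G \mid \langle c,g\rangle \text{ is cyclic for all } g \in G\}$; it is a normal subgroup of $G$. *)

theory Defs
  imports "HOL-Algebra.Elementary_Groups" "HOL-Algebra.Coset"
begin

definition gen_rank :: "('a, 'b) monoid_scheme \<Rightarrow> nat" where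
  "gen_rank H = (LEAST n. \<exists>S. S \<subseteq> carrier H \<and> finite S \<and> card S = n \<and>
                              generate H S = carrier H)"

definition flexible :: "('a, 'b) monoid_scheme \<Rightarrow> nat \<Rightarrow> bool" where
  "flexible H k \<longleftrightarrow> 1 \<le> k \<and> k \<le> gen_rank H \<and>
     (\<forall>x :: nat \<Rightarrow> 'a. (\<forall>i<k. x i \<in> carrier H) \<longrightarrow>
        gen_rank (subgroup_generated H (x ` {..<k})) = k \<longrightarrow>
        (\<exists>y :: nat \<Rightarrow> 'a. (\<forall>i<k. y i = x i) \<and> (\<forall>i<gen_rank H. y i \<in> carrier H) \<and>
             generate H (y ` {..<gen_rank H}) = carrier H))"

definition Cyc :: "('a, 'b) monoid_scheme \<Rightarrow> 'a set" where
  "Cyc G = {c \<in> carrier G. \<forall>g \<in> carrier G. cyclic_group (subgroup_generated G {c, g})}"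

end

theory Submission
  imports Defs "HOL-Algebra.Multiplicative_Group"
begin

lemma gen_rank_le:
  assumes "finite S" "S \<subseteq> carrier H" "generate H S = carrier H"
  shows "gen_rank H \<le> card S"
  unfolding gen_rank_def by (rule Least_le) (use assms in blast)

lemma gen_rank_ex:
  assumes "group H" "finite (carrier H)"
  shows "\<exists>S. S \<subseteq> carrier H \<and> finite S \<and> card S = gen_rank H \<and> generate H S = carrier H"
proof -
  have "generate H (carrier H) = carrier H"
    using group.generate_incl[OF assms(1), of "carrier H"] generate.incl[of _ "carrier H" H] by blast
  hence "\<exists>S. S \<subseteq> carrier H \<and> finite S \<and> card S = card (carrier H) \<and> generate H S = carrier H"
    using assms(2) by blast
  hence "\<exists>n. \<exists>S. S \<subseteq> carrier H \<and> finite S \<and> card S = n \<and> generate H S = carrier H" by blast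
  from LeastI_ex[OF this] show ?thesis unfolding gen_rank_def .
qed

context group
begin

lemma sub_cyclic:
  assumes fin: "finite (carrier G)" and w: "w \<in> carrier G"
    and S: "S \<subseteq> generate G {w}"
  shows "\<exists>v \<in> generate G S. generate G S = generate G {v}"
proof -
  have Sc: "S \<subseteq> carrier G" using S generate_incl[of "{w}"] w by auto
  let ?H = "generate G S"
  have sgH: "subgroup ?H G" by (rule generate_is_subgroup[OF Sc])
  have Hw: "?H \<subseteq> generate G {w}"
    using generate_subgroup_incl[OF S generate_is_subgroup] w by auto
  define P where "P = (\<lambda>k::nat. 0 < k \<and> w [^] k \<in> ?H)"
  have "P (ord w)" unfolding P_def using ord_ge_1[OF fin w] w
    by (simp add: subgroup.one_closed[OF sgH])
  define k where "k = (LEAST k. P k)"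
  have Pk: "P k" unfolding k_def by (rule LeastI, fact)
  have kmin: "\<And>j. 0 < j \<Longrightarrow> j < k \<Longrightarrow> w [^] j \<notin> ?H"
    using not_less_Least unfolding k_def P_def by blast
  have wk: "w [^] k \<in> ?H" "0 < k" using Pk unfolding P_def by auto
  have "?H \<subseteq> generate G {w [^] k}"
  proof
    fix h assume h: "h \<in> ?H"
    then obtain i :: int where hi: "h = w [^] i" using Hw generate_pow[OF w] by auto
    define q where "q = i div int k"
    define r where "r = i mod int k"
    have ir: "i = int k * q + r" unfolding q_def r_def by simp
    have r0: "0 \<le> r" "r < int k" unfolding r_def using wk(2) by auto
    have "w [^] r = w [^] i \<otimes> inv ((w [^] (int k)) [^] q)"
      using w by (simp add: int_pow_pow int_pow_diff[symmetric] ir)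
    also have "\<dots> \<in> ?H"
    proof -
      have "w [^] (int k) \<in> ?H" using wk by (simp add: int_pow_int)
      hence "(w [^] (int k)) [^] q \<in> ?H"
        by (rule subgroup_int_pow_closed[OF sgH])
      thus ?thesis using h hi sgH by (simp add: subgroup.m_closed subgroup.m_inv_closed)
    qed
    finally have wr: "w [^] r \<in> ?H" .
    have "r = 0"
    proof (rule ccontr)
      assume "r \<noteq> 0"
      hence "0 < nat r" "nat r < k" using r0 by auto
      moreover have "w [^] (nat r) \<in> ?H" using wr r0 int_pow_int[of G w "nat r"] by simp
      ultimately show False using kmin by blast
    qed
    hence "h = (w [^] k) [^] q" using hi ir w by (simp add: int_pow_pow int_pow_int[symmetric])
    thus "h \<in> generate G {w [^] k}" using generate_pow[of "w [^] k"] w by auto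
  qed
  moreover have "generate G {w [^] k} \<subseteq> ?H"
    using generate_subgroup_incl[OF _ sgH] wk by auto
  ultimately show ?thesis using wk by blast
qed

lemma cyc_iff:
  assumes S: "S \<subseteq> carrier G"
  shows "cyclic_group (subgroup_generated G S) \<longleftrightarrow> (\<exists>x \<in> generate G S. generate G {x} = generate G S)"
proof -
  let ?H = "subgroup_generated G S"
  have cH: "carrier ?H = generate G S" using S by (simp add: carrier_subgroup_generated Int_absorb1)
  have H: "?H = G\<lparr>carrier := generate G S\<rparr>" using S by (simp add: subgroup_generated_def Int_absorb1)
  have sg: "subgroup (generate G S) G" by (rule generate_is_subgroup[OF S])
  have eq: "subgroup_generated ?H {x} = ?H \<longleftrightarrow> generate G {x} = generate G S"
    if x: "x \<in> generate G S" for x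
  proof -
    have "generate ?H {x} = generate G {x}"
      unfolding H by (rule generate_consistent) (use x sg in auto)
    hence "subgroup_generated ?H {x} = ?H\<lparr>carrier := generate G {x}\<rparr>"
      using x cH by (simp add: subgroup_generated_def[of ?H] Int_absorb2)
    also have "\<dots> = ?H \<longleftrightarrow> generate G {x} = generate G S"
    proof
      assume "?H\<lparr>carrier := generate G {x}\<rparr> = ?H"
      hence "carrier (?H\<lparr>carrier := generate G {x}\<rparr>) = carrier ?H" by simp
      thus "generate G {x} = generate G S" using cH by simp
    next
      assume "generate G {x} = generate G S"
      thus "?H\<lparr>carrier := generate G {x}\<rparr> = ?H" using cH by simp
    qed
    finally show ?thesis .
  qed
  show ?thesis unfolding cyclic_group_def using eq cH by auto
qed

lemma cyc_sub:
  assumes fin: "finite (carrier G)" and w: "w \<in> carrier G"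
    and S: "S \<subseteq> generate G {w}"
  shows "cyclic_group (subgroup_generated G S)"
proof -
  have Sc: "S \<subseteq> carrier G" using S generate_incl[of "{w}"] w by auto
  show ?thesis using sub_cyclic[OF fin w S] cyc_iff[OF Sc] by metis
qed

lemma Cyc_pair:
  assumes c: "c \<in> Cyc G" and g: "g \<in> carrier G"
  shows "\<exists>w \<in> generate G {c,g}. generate G {w} = generate G {c,g}"
proof -
  have cc: "c \<in> carrier G" using c by (simp add: Cyc_def)
  have "cyclic_group (subgroup_generated G {c,g})" using c g by (simp add: Cyc_def)
  thus ?thesis using cyc_iff[of "{c,g}"] cc g by auto
qed

lemma gen_in_carrier: "S \<subseteq> carrier G \<Longrightarrow> x \<in> generate G S \<Longrightarrow> x \<in> carrier G"
  using generate_in_carrier by blast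

lemma Cyc_comm:
  assumes c: "c \<in> Cyc G" and g: "g \<in> carrier G"
  shows "c \<otimes> g = g \<otimes> c"
proof -
  have cc: "c \<in> carrier G" using c by (simp add: Cyc_def)
  obtain w where w: "w \<in> generate G {c,g}" "generate G {w} = generate G {c,g}"
    using Cyc_pair[OF c g] by blast
  have wc: "w \<in> carrier G" using gen_in_carrier[OF _ w(1)] cc g by auto
  have "c \<in> generate G {w}" "g \<in> generate G {w}" using w(2) generate.incl[of _ "{c,g}" G] by auto
  then obtain i j :: int where "c = w [^] i" "g = w [^] j" using generate_pow[OF wc] by auto
  thus ?thesis using wc by (simp add: int_pow_mult[symmetric] add.commute)
qed

lemma gen_sub_gen:
  assumes "S \<subseteq> carrier G" "T \<subseteq> generate G S"
  shows "generate G T \<subseteq> generate G S"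
  using generate_subgroup_incl[OF assms(2) generate_is_subgroup[OF assms(1)]] .

lemma Cyc_subgroup:
  assumes fin: "finite (carrier G)"
  shows "subgroup (Cyc G) G"
proof
  show "Cyc G \<subseteq> carrier G" by (auto simp: Cyc_def)
next
  show "\<one> \<in> Cyc G"
  proof -
    have "cyclic_group (subgroup_generated G {\<one>, g})" if g: "g \<in> carrier G" for g
      by (rule cyc_sub[OF fin g]) (use g generate.incl[of g "{g}" G] generate.one[of G "{g}"] in auto)
    thus ?thesis by (simp add: Cyc_def)
  qed
next
  fix c d assume c: "c \<in> Cyc G" and d: "d \<in> Cyc G"
  have cc: "c \<in> carrier G" "d \<in> carrier G" using c d by (auto simp: Cyc_def)
  have "cyclic_group (subgroup_generated G {c \<otimes> d, g})" if g: "g \<in> carrier G" for g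
  proof -
    obtain u where u: "u \<in> generate G {c,g}" "generate G {u} = generate G {c,g}"
      using Cyc_pair[OF c g] by blast
    have uc: "u \<in> carrier G" using gen_in_carrier[OF _ u(1)] cc g by auto
    obtain w where w: "w \<in> generate G {d,u}" "generate G {w} = generate G {d,u}"
      using Cyc_pair[OF d uc] by blast
    have wc: "w \<in> carrier G" using gen_in_carrier[OF _ w(1)] cc uc by auto
    have "u \<in> generate G {w}" "d \<in> generate G {w}" using w(2) generate.incl[of _ "{d,u}" G] by auto
    hence "generate G {u} \<subseteq> generate G {w}" using gen_sub_gen[of "{w}" "{u}"] wc by auto
    hence "c \<in> generate G {w}" "g \<in> generate G {w}" using u(2) generate.incl[of _ "{c,g}" G] by auto
    hence "{c \<otimes> d, g} \<subseteq> generate G {w}" using \<open>d \<in> generate G {w}\<close> generate.eng by auto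
    thus ?thesis by (rule cyc_sub[OF fin wc])
  qed
  thus "c \<otimes> d \<in> Cyc G" using cc by (simp add: Cyc_def)
next
  fix c assume c: "c \<in> Cyc G"
  have cc: "c \<in> carrier G" using c by (auto simp: Cyc_def)
  have "cyclic_group (subgroup_generated G {inv c, g})" if g: "g \<in> carrier G" for g
  proof -
    obtain w where w: "w \<in> generate G {c,g}" "generate G {w} = generate G {c,g}"
      using Cyc_pair[OF c g] by blast
    have wc: "w \<in> carrier G" using gen_in_carrier[OF _ w(1)] cc g by auto
    have "c \<in> generate G {w}" "g \<in> generate G {w}" using w(2) generate.incl[of _ "{c,g}" G] by auto
    hence "{inv c, g} \<subseteq> generate G {w}" using generate_m_inv_closed[of "{w}" c] wc by auto
    thus ?thesis by (rule cyc_sub[OF fin wc])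
  qed
  thus "inv c \<in> Cyc G" using cc by (simp add: Cyc_def)
qed

lemma Cyc_normal:
  assumes fin: "finite (carrier G)"
  shows "Cyc G \<lhd> G"
proof -
  have "x \<otimes> h \<otimes> inv x \<in> Cyc G" if x: "x \<in> carrier G" and h: "h \<in> Cyc G" for x h
  proof -
    have hc: "h \<in> carrier G" using h by (auto simp: Cyc_def)
    have "x \<otimes> h \<otimes> inv x = h \<otimes> x \<otimes> inv x" using Cyc_comm[OF h x] by simp
    also have "\<dots> = h" using x hc by (simp add: m_assoc)
    finally show ?thesis using h by simp
  qed
  thus ?thesis using normal_inv_iff Cyc_subgroup[OF fin] by blast
qed

lemma Cyc_gen:
  assumes fin: "finite (carrier G)"
  shows "\<exists>z \<in> Cyc G. Cyc G = generate G {z}"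
proof -
  let ?C = "Cyc G"
  have sg: "subgroup ?C G" by (rule Cyc_subgroup[OF fin])
  have Cc: "?C \<subseteq> carrier G" by (auto simp: Cyc_def)
  have finC: "finite ?C" using Cc fin finite_subset by blast
  have ne: "?C \<noteq> {}" using subgroup.one_closed[OF sg] by blast
  let ?f = "\<lambda>z. card (generate G {z})"
  have fim: "finite (?f ` ?C)" using finC by simp
  have "Max (?f ` ?C) \<in> ?f ` ?C" by (rule Max_in[OF fim]) (use ne in simp)
  then obtain z where z1: "z \<in> ?C" and zM: "?f z = Max (?f ` ?C)" by (auto simp del: Max_in)
  have z: "z \<in> ?C" "\<And>y. y \<in> ?C \<Longrightarrow> ?f y \<le> ?f z"
    using z1 zM Max_ge[OF fim] by auto
  have zc: "z \<in> carrier G" using z Cc by auto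
  have "?C \<subseteq> generate G {z}"
  proof
    fix c assume c: "c \<in> ?C"
    have cc: "c \<in> carrier G" using c Cc by auto
    obtain w where w: "w \<in> generate G {z,c}" "generate G {w} = generate G {z,c}"
      using Cyc_pair[OF z(1) cc] by blast
    have "generate G {z,c} \<subseteq> ?C" using generate_subgroup_incl[OF _ sg] z(1) c by auto
    hence wC: "w \<in> ?C" using w by auto
    have wc: "w \<in> carrier G" using wC Cc by auto
    have "z \<in> generate G {w}" using w(2) generate.incl[of z "{z,c}" G] by auto
    hence sub: "generate G {z} \<subseteq> generate G {w}" using gen_sub_gen[of "{w}" "{z}"] wc by auto
    have fw: "finite (generate G {w})" using generate_incl[of "{w}"] wc by (intro finite_subset[OF _ fin]) auto
    have "card (generate G {w}) \<le> card (generate G {z})" using z(2)[OF wC] .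
    hence "generate G {z} = generate G {w}" using card_subset_eq[OF fw sub] card_mono[OF fw sub] by (metis le_antisym)
    thus "c \<in> generate G {z}" using w(2) generate.incl[of c "{z,c}" G] by auto
  qed
  moreover have "generate G {z} \<subseteq> ?C" using generate_subgroup_incl[OF _ sg] z(1) by auto
  ultimately show ?thesis using z(1) by blast
qed

lemma rank_quot:
  assumes fin: "finite (carrier G)" and r2: "gen_rank G \<ge> 2"
  shows "gen_rank G \<le> gen_rank (G Mod Cyc G)"
proof -
  let ?C = "Cyc G"
  let ?Q = "G Mod ?C"
  let ?r = "\<lambda>x. ?C #> x"
  have nC: "?C \<lhd> G" by (rule Cyc_normal[OF fin])
  have sg: "subgroup ?C G" by (rule Cyc_subgroup[OF fin])
  have Cc: "?C \<subseteq> carrier G" by (auto simp: Cyc_def)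
  have gQ: "group ?Q" by (rule normal.factorgroup_is_group[OF nC])
  have cQ: "carrier ?Q = ?r ` carrier G" by (rule carrier_FactGroup)
  have finQ: "finite (carrier ?Q)" using cQ fin by simp
  have hom: "group_hom G ?Q ?r"
    unfolding group_hom_def group_hom_axioms_def
    using gQ normal.r_coset_hom_Mod[OF nC] is_group by blast
  obtain S where S: "S \<subseteq> carrier ?Q" "finite S" "card S = gen_rank ?Q" "generate ?Q S = carrier ?Q"
    using gen_rank_ex[OF gQ finQ] by blast
  define rep where "rep = (\<lambda>X::'a set. SOME x. x \<in> X)"
  define T where "T = rep ` S"
  have repX: "rep X \<in> carrier G \<and> X = ?C #> rep X" if X: "X \<in> S" for X
  proof -
    obtain x where x: "x \<in> carrier G" "X = ?C #> x" using X S(1) cQ by auto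
    have "x \<in> X" using x rcos_self[OF x(1) sg] by simp
    hence rX: "rep X \<in> X" unfolding rep_def by (rule someI)
    have "rep X \<in> carrier G" using rX x subgroup.elemrcos_carrier[OF sg is_group x(1)] by auto
    moreover have "X = ?C #> rep X" using repr_independence[of "rep X" ?C x] rX x sg by simp
    ultimately show ?thesis by blast
  qed
  have Tc: "T \<subseteq> carrier G" using repX unfolding T_def by auto
  have rT: "?r ` T = S" unfolding T_def using repX by (auto simp: image_image)
  have finT: "finite T" "card T \<le> card S" unfolding T_def using S(2) by (auto intro: card_image_le)
  have genQ: "generate ?Q S = ?r ` generate G T"
    using group_hom.generate_img[OF hom Tc] rT by simp
  have decomp: "\<exists>c \<in> ?C. \<exists>h \<in> generate G T. g = c \<otimes> h" if g: "g \<in> carrier G" for g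
  proof -
    have "?r g \<in> ?r ` generate G T" using genQ S(4) cQ g by auto
    then obtain h where h: "h \<in> generate G T" "?C #> g = ?C #> h" by auto
    have hc: "h \<in> carrier G" using gen_in_carrier[OF Tc h(1)] .
    have "g \<in> ?C #> h" using repr_independenceD[OF sg g] h(2) by simp
    thus ?thesis using h(1) unfolding r_coset_def by auto
  qed
  have key: "generate G T' = carrier G" if T': "T' \<subseteq> carrier G" "T \<union> ?C \<subseteq> generate G T'" for T'
  proof
    show "generate G T' \<subseteq> carrier G" using generate_incl[OF T'(1)] .
  next
    show "carrier G \<subseteq> generate G T'"
    proof
      fix g assume g: "g \<in> carrier G"
      obtain c h where ch: "c \<in> ?C" "h \<in> generate G T" "g = c \<otimes> h" using decomp[OF g] by blast
      have "generate G T \<subseteq> generate G T'" using gen_sub_gen[OF T'(1)] T'(2) by auto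
      hence "h \<in> generate G T'" using ch by auto
      moreover have "c \<in> generate G T'" using ch T'(2) by auto
      ultimately show "g \<in> generate G T'" using ch generate.eng by simp
    qed
  qed
  obtain z where z: "z \<in> ?C" "?C = generate G {z}" using Cyc_gen[OF fin] by blast
  have zc: "z \<in> carrier G" using z Cc by auto
  show ?thesis
  proof (cases "T = {}")
    case True
    have "generate G {z} = carrier G" using key[of "{z}"] zc z True by auto
    hence "gen_rank G \<le> card {z}" using gen_rank_le[of "{z}" G] zc by auto
    thus ?thesis using r2 by simp
  next
    case False
    then obtain t where t: "t \<in> T" by blast
    have tc: "t \<in> carrier G" using t Tc by auto
    obtain w where w: "w \<in> generate G {z,t}" "generate G {w} = generate G {z,t}"
      using Cyc_pair[OF z(1) tc] by blast
    have wc: "w \<in> carrier G" using gen_in_carrier[OF _ w(1)] zc tc by auto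
    define T' where "T' = insert w (T - {t})"
    have T'c: "T' \<subseteq> carrier G" unfolding T'_def using wc Tc by auto
    have "generate G {w} \<subseteq> generate G T'"
      using mono_generate[of "{w}" T'] unfolding T'_def by auto
    hence zt: "z \<in> generate G T'" "t \<in> generate G T'"
      using w(2) generate.incl[of _ "{z,t}" G] by auto
    have "?C \<subseteq> generate G T'" using z(2) gen_sub_gen[OF T'c, of "{z}"] zt by auto
    moreover have "T - {t} \<subseteq> generate G T'" using generate.incl[of _ T' G] unfolding T'_def by auto
    ultimately have "T \<union> ?C \<subseteq> generate G T'" using zt by auto
    hence "generate G T' = carrier G" using key[OF T'c] by blast
    hence "gen_rank G \<le> card T'" using gen_rank_le[of T' G] T'c finT unfolding T'_def by auto
    also have "card T' \<le> card T"
    proof -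
      have "card T' \<le> Suc (card (T - {t}))" unfolding T'_def using finT card_insert_le_m1
        by (simp add: card_insert_if)
      also have "\<dots> = card T" using t finT card_Suc_Diff1 by metis
      finally show ?thesis .
    qed
    finally show ?thesis using finT S(3) by simp
  qed
qed

end

lemma (in group) main_lemma:
  assumes "finite (carrier G)"
    and "gen_rank G \<ge> 2"
    and "flexible G 2"
  shows "flexible (G Mod Cyc G) 1"
proof -
  note fin = assms(1)
  let ?C = "Cyc G"
  let ?Q = "G Mod ?C"
  let ?r = "\<lambda>x. ?C #> x"
  let ?d = "gen_rank G"
  let ?m = "gen_rank ?Q"
  have nC: "?C \<lhd> G" by (rule Cyc_normal[OF fin])
  have sg: "subgroup ?C G" by (rule Cyc_subgroup[OF fin])
  have Cc: "?C \<subseteq> carrier G" by (auto simp: Cyc_def)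
  have gQ: "group ?Q" by (rule normal.factorgroup_is_group[OF nC])
  have cQ: "carrier ?Q = ?r ` carrier G" by (rule carrier_FactGroup)
  have hom: "group_hom G ?Q ?r"
    unfolding group_hom_def group_hom_axioms_def
    using gQ normal.r_coset_hom_Mod[OF nC] is_group by blast
  have dm: "?d \<le> ?m" by (rule rank_quot[OF fin assms(2)])
  have Hflex: "\<And>x. (\<forall>i<2. x i \<in> carrier G) \<Longrightarrow> gen_rank (subgroup_generated G (x ` {..<2})) = 2 \<Longrightarrow>
        (\<exists>y. (\<forall>i<2. y i = x i) \<and> (\<forall>i<?d. y i \<in> carrier G) \<and> generate G (y ` {..<?d}) = carrier G)"
    using assms(3) unfolding flexible_def by blast
  have main: "\<exists>y. (\<forall>i<1. y i = x i) \<and> (\<forall>i<?m. y i \<in> carrier ?Q) \<and> generate ?Q (y ` {..<?m}) = carrier ?Q"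
    if xQ: "\<forall>i<1. x i \<in> carrier ?Q" and rk: "gen_rank (subgroup_generated ?Q (x ` {..<1})) = 1" for x
  proof -
    have x1: "x ` {..<1} = {x 0}" by auto
    obtain x0 where x0: "x0 \<in> carrier G" "x 0 = ?C #> x0" using xQ cQ by auto
    have x0C: "x0 \<notin> ?C"
    proof
      assume "x0 \<in> ?C"
      hence "x 0 = \<one>\<^bsub>?Q\<^esub>" using x0 subgroup.rcos_const[OF sg is_group] by simp
      moreover
      let ?K = "subgroup_generated ?Q {\<one>\<^bsub>?Q\<^esub>}"
      have gK: "group ?K" using group.group_subgroup_generated[OF gQ] .
      have "carrier ?K = {\<one>\<^bsub>?Q\<^esub>}"
        using group.generate_one[OF gQ] monoid.one_closed[OF group.is_monoid[OF gQ]] by (simp add: carrier_subgroup_generated)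
      hence "generate ?K {} = carrier ?K" using group.generate_empty[OF gK] by simp
      hence "gen_rank ?K \<le> 0" using gen_rank_le[of "{}" ?K] by simp
      ultimately show False using rk x1 by simp
    qed
    then obtain g where g: "g \<in> carrier G" "\<not> cyclic_group (subgroup_generated G {x0, g})"
      using x0 by (auto simp: Cyc_def)
    define xx where "xx = (\<lambda>i::nat. if i = 0 then x0 else g)"
    have xx2: "xx ` {..<2} = {x0, g}"
    proof -
      have "{..<2::nat} = {0, 1}" by auto
      thus ?thesis unfolding xx_def by auto
    qed
    let ?K = "subgroup_generated G {x0, g}"
    have xgc: "{x0, g} \<subseteq> carrier G" using x0 g by auto
    have cK: "carrier ?K = generate G {x0, g}" using xgc by (simp add: carrier_subgroup_generated Int_absorb1)
    have Kdef: "?K = G\<lparr>carrier := generate G {x0, g}\<rparr>" using xgc by (simp add: subgroup_generated_def Int_absorb1)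
    have sgK: "subgroup (generate G {x0, g}) G" by (rule generate_is_subgroup[OF xgc])
    have genK: "generate ?K A = generate G A" if "A \<subseteq> carrier ?K" for A
      unfolding Kdef by (rule generate_consistent) (use that cK sgK in auto)
    have gK: "group ?K" by simp
    have finK: "finite (carrier ?K)" using cK generate_incl[OF xgc] fin finite_subset by metis
    have rkK: "gen_rank ?K = 2"
    proof (rule antisym)
      have sub: "{x0, g} \<subseteq> carrier ?K" using subgroup_generated_subset_carrier_subset[OF xgc] .
      have "generate ?K {x0, g} = carrier ?K" using genK[OF sub] cK by simp
      hence "gen_rank ?K \<le> card {x0, g}" using gen_rank_le[of "{x0,g}" ?K] sub by simp
      also have "\<dots> \<le> 2" by (simp add: card_insert_if)
      finally show "gen_rank ?K \<le> 2" .
    next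
      show "2 \<le> gen_rank ?K"
      proof (rule ccontr)
        assume "\<not> 2 \<le> gen_rank ?K"
        hence le1: "gen_rank ?K \<le> Suc 0" by simp
        obtain S0 where S0: "S0 \<subseteq> carrier ?K" "finite S0" "card S0 = gen_rank ?K" "generate ?K S0 = carrier ?K"
          using gen_rank_ex[OF gK finK] by blast
        have all: "\<forall>a1\<in>S0. \<forall>a2\<in>S0. a1 = a2" using card_le_Suc0_iff_eq[OF S0(2)] le1 S0(3) by simp
        obtain s where s: "s \<in> carrier ?K" "S0 \<subseteq> {s}"
        proof (cases "S0 = {}")
          case True thus ?thesis using that[of "\<one>"] cK generate.one[of G] by auto
        next
          case False then obtain s where "s \<in> S0" by blast
          thus ?thesis using that[of s] all S0(1) by blast
        qed
        have "generate G {s} = generate G {x0, g}"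
        proof
          show "generate G {s} \<subseteq> generate G {x0, g}"
            using generate_subgroup_incl[OF _ sgK] s cK by auto
        next
          have "generate G {x0, g} = generate G S0" using S0(1,4) genK cK by simp
          also have "\<dots> \<subseteq> generate G {s}" using mono_generate[OF s(2)] .
          finally show "generate G {x0, g} \<subseteq> generate G {s}" .
        qed
        hence "cyclic_group ?K" using cyc_iff[OF xgc] s cK by blast
        thus False using g by simp
      qed
    qed
    have "\<forall>i<2. xx i \<in> carrier G" using x0 g unfolding xx_def by auto
    moreover have "gen_rank (subgroup_generated G (xx ` {..<2})) = 2" using rkK xx2 by simp
    ultimately obtain y where y: "\<forall>i<2. y i = xx i" "\<forall>i<?d. y i \<in> carrier G" "generate G (y ` {..<?d}) = carrier G"
      using Hflex by blast
    define z where "z = (\<lambda>i. if i < ?d then ?C #> y i else ?C)"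
    have "z 0 = x 0" using y(1) assms(2) x0 unfolding z_def xx_def by auto
    moreover have zc: "\<forall>i<?m. z i \<in> carrier ?Q"
      unfolding z_def using y(2) cQ monoid.one_closed[OF group.is_monoid[OF gQ]] by auto
    moreover have "generate ?Q (z ` {..<?m}) = carrier ?Q"
    proof
      have "z ` {..<?m} \<subseteq> carrier ?Q" using zc by auto
      thus "generate ?Q (z ` {..<?m}) \<subseteq> carrier ?Q" by (rule group.generate_incl[OF gQ])
    next
      have Yc: "y ` {..<?d} \<subseteq> carrier G" using y(2) by auto
      have "carrier ?Q = ?r ` generate G (y ` {..<?d})" using y(3) cQ by simp
      also have "\<dots> = generate ?Q (?r ` y ` {..<?d})" using group_hom.generate_img[OF hom Yc] by simp
      also have "\<dots> \<subseteq> generate ?Q (z ` {..<?m})"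
      proof (rule group.mono_generate[OF gQ])
        show "?r ` y ` {..<?d} \<subseteq> z ` {..<?m}"
        proof
          fix X assume "X \<in> ?r ` y ` {..<?d}"
          then obtain i where i: "i < ?d" "X = ?C #> y i" by auto
          hence "X = z i" "i < ?m" unfolding z_def using dm by auto
          thus "X \<in> z ` {..<?m}" by auto
        qed
      qed
      finally show "carrier ?Q \<subseteq> generate ?Q (z ` {..<?m})" .
    qed
    ultimately show ?thesis by (intro exI[of _ z]) auto
  qed
  show ?thesis unfolding flexible_def using main dm assms(2) by auto
qed


theorem corollary2p6:
  fixes G :: "('a, 'b) monoid_scheme"
  assumes "group G" and "finite (carrier G)"
    and "gen_rank G \<ge> 2"
    and "flexible G 2"
  shows "flexible (G Mod Cyc G) 1"
  using group.main_lemma[OF assms] .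

end
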